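(* Let $M$ be a commutative von Neumann algebra with a faithful normal finite trace $\tau$, let $\Lambda$ be a quadratic family of Young functions, and let $\delta$ be an additive derivation on $L^{\Lambda}(M,\tau)$. Then $z_\delta M$ is a finite-dimensional algebra.
   Context: For a von Neumann algebra $N$ with faithful normal trace $\tau$, $S(N,\tau)$ is the *-algebra of $\tau$-measurable operators affiliated with $N$. A Young function is $\phi(t)=\int_0^t\varphi(s)ds$ with $\varphi\ge0$ right continuous, nondecreasing, $\varphi(0)=0$, $\varphi(s)>0$ for $s>0$, $\varphi(s)\to\infty$. $L_\phi(N,\tau)=\bigcup_n n\{x\in S(N,\tau):\tau(\phi(|x|))\le1\}$. $\phi_1\prec\phi_2$ means $\phi_1(t)\le\phi_2(ct)$ for $t\ge T$, some $c,T\ge0$. A family $\Lambda$ is quadratic if any two members are $\prec$ some member and for each $\phi\in\Lambda$ there are $\psi\in\Lambda$, $c>0,T\ge0$ with $\phi(t^2)\le\psi(ct)$ for $t\ge T$. $L^\Lambda(N,\tau)=\bigcap_{\phi\in\Lambda}L_\phi(N,\tau)$. An additive derivation is an additive map $\delta$ with $\delta(xy)=\delta(x)y+x\delta(y)$. The support of $\delta$ is $z_\delta=\inf\{z\in P(M): z\delta=\delta\}$, where $P(M)$ is the projection lattice of $M$ and $(z\delta)(x)=z\delta(x)$. *)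

theory Defs
  imports "HOL-Analysis.Analysis"
begin

text \<open>Model: a commutative von Neumann algebra M with a faithful normal finite trace
  is (up to trace-preserving *-isomorphism) L-infinity of a finite measure space,
  with trace = integral. Elements are represented by complex-valued measurable
  functions, identified when equal almost everywhere.\<close>

definition young_function :: "(real \<Rightarrow> real) \<Rightarrow> bool" where
  "young_function \<phi> \<longleftrightarrow>
     (\<exists>\<psi> :: real \<Rightarrow> real.
        (\<forall>s\<ge>0. \<psi> s \<ge> 0) \<and>
        (\<forall>s\<ge>0. continuous (at_right s) \<psi>) \<and>
        mono_on {0..} \<psi> \<and>
        \<psi> 0 = 0 \<and>
        (\<forall>s>0. \<psi> s > 0) \<and>
        filterlim \<psi> at_top at_top \<and>
        (\<forall>t\<ge>0. \<phi> t = integral {0..t} \<psi>))"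

definition young_prec :: "(real \<Rightarrow> real) \<Rightarrow> (real \<Rightarrow> real) \<Rightarrow> bool" where
  "young_prec \<phi>1 \<phi>2 \<longleftrightarrow> (\<exists>c\<ge>0. \<exists>T\<ge>0. \<forall>t\<ge>T. \<phi>1 t \<le> \<phi>2 (c * t))"

definition quadratic_family :: "(real \<Rightarrow> real) set \<Rightarrow> bool" where
  "quadratic_family \<Lambda> \<longleftrightarrow>
     (\<forall>\<phi>\<in>\<Lambda>. young_function \<phi>) \<and>
     (\<forall>\<phi>1\<in>\<Lambda>. \<forall>\<phi>2\<in>\<Lambda>. \<exists>\<phi>\<in>\<Lambda>. young_prec \<phi>1 \<phi> \<and> young_prec \<phi>2 \<phi>) \<and>
     (\<forall>\<phi>\<in>\<Lambda>. \<exists>\<psi>\<in>\<Lambda>. \<exists>c>0. \<exists>T\<ge>0. \<forall>t\<ge>T. \<phi> (t\<^sup>2) \<le> \<psi> (c * t))"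

text \<open>S(M,tau): all measurable complex functions (the trace is finite, so every
  affiliated operator is tau-measurable).\<close>
definition meas_ops :: "'a measure \<Rightarrow> ('a \<Rightarrow> complex) set" where
  "meas_ops \<mu> = borel_measurable \<mu>"

definition orlicz :: "'a measure \<Rightarrow> (real \<Rightarrow> real) \<Rightarrow> ('a \<Rightarrow> complex) set" where
  "orlicz \<mu> \<phi> = {x \<in> meas_ops \<mu>. \<exists>n::nat. \<exists>y \<in> meas_ops \<mu>.
       (\<integral>\<^sup>+ \<omega>. ennreal (\<phi> (cmod (y \<omega>))) \<partial>\<mu>) \<le> 1 \<and>
       (AE \<omega> in \<mu>. x \<omega> = of_nat n * y \<omega>)}"

definition orlicz_inter :: "'a measure \<Rightarrow> (real \<Rightarrow> real) set \<Rightarrow> ('a \<Rightarrow> complex) set" where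
  "orlicz_inter \<mu> \<Lambda> = {x \<in> meas_ops \<mu>. \<forall>\<phi>\<in>\<Lambda>. x \<in> orlicz \<mu> \<phi>}"

text \<open>Additive derivation on the algebra of classes of A (a set of representatives),
  described on representatives, respecting a.e. equality.\<close>
definition additive_derivation ::
  "'a measure \<Rightarrow> ('a \<Rightarrow> complex) set \<Rightarrow> (('a \<Rightarrow> complex) \<Rightarrow> ('a \<Rightarrow> complex)) \<Rightarrow> bool" where
  "additive_derivation \<mu> A \<delta> \<longleftrightarrow>
     (\<forall>x\<in>A. \<delta> x \<in> A) \<and>
     (\<forall>x\<in>A. \<forall>y\<in>A. (AE \<omega> in \<mu>. x \<omega> = y \<omega>) \<longrightarrow> (AE \<omega> in \<mu>. \<delta> x \<omega> = \<delta> y \<omega>)) \<and>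
     (\<forall>x\<in>A. \<forall>y\<in>A. AE \<omega> in \<mu>. \<delta> (\<lambda>t. x t + y t) \<omega> = \<delta> x \<omega> + \<delta> y \<omega>) \<and>
     (\<forall>x\<in>A. \<forall>y\<in>A. AE \<omega> in \<mu>. \<delta> (\<lambda>t. x t * y t) \<omega> = \<delta> x \<omega> * y \<omega> + x \<omega> * \<delta> y \<omega>)"

text \<open>Projections of M = indicators of measurable sets. z delta = delta.\<close>
definition proj_fixes :: "'a measure \<Rightarrow> ('a \<Rightarrow> complex) set \<Rightarrow> (('a \<Rightarrow> complex) \<Rightarrow> ('a \<Rightarrow> complex)) \<Rightarrow> 'a set \<Rightarrow> bool" where
  "proj_fixes \<mu> A \<delta> Z \<longleftrightarrow> Z \<in> sets \<mu> \<and>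
     (\<forall>x\<in>A. AE \<omega> in \<mu>. indicator Z \<omega> * \<delta> x \<omega> = \<delta> x \<omega>)"

text \<open>Z is (a representative of) the support z_delta: the infimum of all projections
  z with z delta = delta (in the projection lattice, order = inclusion a.e.).\<close>
definition support_proj :: "'a measure \<Rightarrow> ('a \<Rightarrow> complex) set \<Rightarrow> (('a \<Rightarrow> complex) \<Rightarrow> ('a \<Rightarrow> complex)) \<Rightarrow> 'a set \<Rightarrow> bool" where
  "support_proj \<mu> A \<delta> Z \<longleftrightarrow> Z \<in> sets \<mu> \<and>
     (\<forall>W. proj_fixes \<mu> A \<delta> W \<longrightarrow> (AE \<omega> in \<mu>. \<omega> \<in> Z \<longrightarrow> \<omega> \<in> W)) \<and>
     (\<forall>Z'. Z' \<in> sets \<mu> \<and> (\<forall>W. proj_fixes \<mu> A \<delta> W \<longrightarrow> (AE \<omega> in \<mu>. \<omega> \<in> Z' \<longrightarrow> \<omega> \<in> W))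
            \<longrightarrow> (AE \<omega> in \<mu>. \<omega> \<in> Z' \<longrightarrow> \<omega> \<in> Z))"

definition Linf :: "'a measure \<Rightarrow> ('a \<Rightarrow> complex) set" where
  "Linf \<mu> = {f \<in> borel_measurable \<mu>. \<exists>C. AE \<omega> in \<mu>. cmod (f \<omega>) \<le> C}"

definition fin_dim_corner :: "'a measure \<Rightarrow> 'a set \<Rightarrow> bool" where
  "fin_dim_corner \<mu> Z \<longleftrightarrow>
     (\<exists>G. finite G \<and> G \<subseteq> Linf \<mu> \<and>
        (\<forall>f\<in>Linf \<mu>. \<exists>c :: ('a \<Rightarrow> complex) \<Rightarrow> complex.
            AE \<omega> in \<mu>. indicator Z \<omega> * f \<omega> = (\<Sum>g\<in>G. c g * g \<omega>)))"

end

theory Submission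
  imports Defs
begin


lemma yf_props:
  assumes "young_function \<phi>"
  shows "\<phi> 0 = 0" and "\<And>t. 0 \<le> t \<Longrightarrow> 0 \<le> \<phi> t"
    and "\<exists>K\<ge>0. \<forall>t. 0 \<le> t \<and> t \<le> 1 \<longrightarrow> \<phi> t \<le> K * t"
    and "\<exists>K>0. \<forall>t\<ge>1. K * (t - 1) \<le> \<phi> t"
    and "(\<lambda>t. \<phi> (max 0 t)) \<in> borel_measurable borel"
proof -
  obtain \<psi> :: "real \<Rightarrow> real" where p0: "\<forall>s\<ge>0. \<psi> s \<ge> 0" and pm: "mono_on {0..} \<psi>"
    and pz: "\<psi> 0 = 0" and ppos: "\<forall>s>0. \<psi> s > 0" and pd: "\<forall>t\<ge>0. \<phi> t = integral {0..t} \<psi>"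
    using assms unfolding young_function_def by blast
  have pmono: "\<psi> s \<le> \<psi> t" if "0 \<le> s" "s \<le> t" for s t
    using pm that unfolding mono_on_def by simp
  have int: "\<psi> integrable_on {a..b}" if "0 \<le> a" for a b
  proof (rule integrable_on_mono_on, rule mono_on_subset[OF pm])
    show "{a..b} \<subseteq> {0..}" using that by auto
  qed
  have inn: "0 \<le> integral {a..b} \<psi>" if "0 \<le> a" for a b
    by (rule integral_nonneg[OF int[OF that]]) (use p0 that in simp)
  show "\<phi> 0 = 0" using pd by simp
  show nn: "0 \<le> \<phi> t" if "0 \<le> t" for t
    using pd that inn[of 0 t] by simp
  show "\<exists>K\<ge>0. \<forall>t. 0 \<le> t \<and> t \<le> 1 \<longrightarrow> \<phi> t \<le> K * t"
  proof (intro exI[of _ "\<psi> 1"] conjI allI impI)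
    show "0 \<le> \<psi> 1" using p0 by simp
    fix t :: real assume t: "0 \<le> t \<and> t \<le> 1"
    have "integral {0..t} \<psi> \<le> integral {0..t} (\<lambda>_. \<psi> 1)"
      by (rule integral_le[OF int[OF order_refl] integrable_const_ivl]) (use t pmono in auto)
    then show "\<phi> t \<le> \<psi> 1 * t" using pd t by (simp add: mult.commute)
  qed
  show "\<exists>K>0. \<forall>t\<ge>1. K * (t - 1) \<le> \<phi> t"
  proof (intro exI[of _ "\<psi> 1"] conjI allI impI)
    show "0 < \<psi> 1" using ppos by simp
    fix t :: real assume t: "1 \<le> t"
    have "integral {1..t} (\<lambda>_. \<psi> 1) \<le> integral {1..t} \<psi>"
      by (rule integral_le[OF integrable_const_ivl int[OF zero_le_one]]) (use t pmono in auto)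
    moreover have "integral {0..t} \<psi> = integral {0..1} \<psi> + integral {1..t} \<psi>"
      using Henstock_Kurzweil_Integration.integral_combine[where a=0 and c=1 and b=t and f=\<psi>] int[of 0 t] t by simp
    moreover have "0 \<le> integral {0..1} \<psi>" using inn by simp
    ultimately show "\<psi> 1 * (t - 1) \<le> \<phi> t" using pd t by (simp add: mult.commute)
  qed
  have "mono (\<lambda>t. \<phi> (max 0 t))"
  proof (rule monoI)
    fix s t :: real assume "s \<le> t"
    define a where "a = max 0 s"
    define b where "b = max 0 t"
    have ab: "0 \<le> a" "a \<le> b" using \<open>s \<le> t\<close> by (auto simp: a_def b_def)
    have "integral {0..b} \<psi> = integral {0..a} \<psi> + integral {a..b} \<psi>"
      using Henstock_Kurzweil_Integration.integral_combine[where a=0 and c=a and b=b and f=\<psi>] int[of 0 b] ab by simp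
    moreover have "0 \<le> integral {a..b} \<psi>" using inn ab by simp
    moreover have "\<phi> a = integral {0..a} \<psi>" "\<phi> b = integral {0..b} \<psi>" using pd ab by auto
    ultimately show "\<phi> (max 0 s) \<le> \<phi> (max 0 t)"
      unfolding a_def[symmetric] b_def[symmetric] by simp
  qed
  then show "(\<lambda>t. \<phi> (max 0 t)) \<in> borel_measurable borel" by (rule borel_measurable_mono)
qed




locale Dv =
  fixes \<mu> :: "'a measure" and \<Lambda> :: "(real \<Rightarrow> real) set"
    and \<delta> :: "('a \<Rightarrow> complex) \<Rightarrow> ('a \<Rightarrow> complex)"
  assumes fm: "finite_measure \<mu>"
    and ne: "\<Lambda> \<noteq> {}"
    and qf: "quadratic_family \<Lambda>"
    and der: "additive_derivation \<mu> (orlicz_inter \<mu> \<Lambda>) \<delta>"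
begin

abbreviation "A \<equiv> orlicz_inter \<mu> \<Lambda>"

lemma yf: "\<phi> \<in> \<Lambda> \<Longrightarrow> young_function \<phi>"
  using qf unfolding quadratic_family_def by blast

lemma A_meas: "x \<in> A \<Longrightarrow> x \<in> borel_measurable \<mu>"
  unfolding orlicz_inter_def meas_ops_def by blast

lemma emeas_space: "emeasure \<mu> (space \<mu>) = ennreal (measure \<mu> (space \<mu>))"
  using fm finite_measure.emeasure_eq_measure by blast

lemma bnd_A:
  assumes f: "f \<in> borel_measurable \<mu>" and C: "\<And>\<omega>. cmod (f \<omega>) \<le> C"
  shows "f \<in> A"
  unfolding orlicz_inter_def
proof (intro CollectI conjI ballI)
  show "f \<in> meas_ops \<mu>" using f unfolding meas_ops_def .
  fix \<phi> assume "\<phi> \<in> \<Lambda>"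
  then have y: "young_function \<phi>" by (rule yf)
  obtain K where K0: "K \<ge> 0" and K: "\<forall>t. 0 \<le> t \<and> t \<le> 1 \<longrightarrow> \<phi> t \<le> K * t"
    using yf_props(3)[OF y] by blast
  have C0: "0 \<le> C" using C[of undefined] norm_ge_zero order_trans by blast
  define m where "m = measure \<mu> (space \<mu>)"
  have m0: "0 \<le> m" unfolding m_def by simp
  obtain n :: nat where n: "1 + C + K * C * m \<le> real n" using real_arch_simple by blast
  have npos: "0 < real n" using n C0 K0 m0 by (smt (verit) mult_nonneg_nonneg)
  define y where "y = (\<lambda>\<omega>. f \<omega> / of_nat n)"
  have ym: "y \<in> meas_ops \<mu>" unfolding y_def meas_ops_def using f by measurable
  have yb: "cmod (y \<omega>) \<le> C / real n" for \<omega>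
    unfolding y_def using C[of \<omega>] npos by (simp add: norm_divide divide_right_mono)
  have Cn: "C / real n \<le> 1" using n npos C0 K0 m0
    by (simp add: divide_le_eq) (smt (verit) mult_nonneg_nonneg)
  have pb: "\<phi> (cmod (y \<omega>)) \<le> K * (C / real n)" for \<omega>
  proof -
    have "\<phi> (cmod (y \<omega>)) \<le> K * cmod (y \<omega>)" using K yb[of \<omega>] Cn by auto
    also have "\<dots> \<le> K * (C / real n)" using mult_left_mono[OF yb[of \<omega>] K0] by simp
    finally show ?thesis .
  qed
  have "(\<integral>\<^sup>+ \<omega>. ennreal (\<phi> (cmod (y \<omega>))) \<partial>\<mu>) \<le> (\<integral>\<^sup>+ \<omega>. ennreal (K * (C / real n)) \<partial>\<mu>)"
    by (rule nn_integral_mono) (use pb in \<open>simp add: ennreal_leI\<close>)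
  also have "\<dots> = ennreal (K * (C / real n)) * ennreal m"
    using emeas_space by (simp add: m_def)
  also have "\<dots> = ennreal (K * (C / real n) * m)"
    using K0 C0 npos m0 by (intro ennreal_mult[symmetric]) auto
  also have "\<dots> \<le> 1"
  proof -
    have "K * C * m \<le> real n" using n C0 by linarith
    then have "K * (C / real n) * m \<le> 1" using npos by (simp add: field_simps)
    then show ?thesis by (simp add: ennreal_leI)
  qed
  finally have I: "(\<integral>\<^sup>+ \<omega>. ennreal (\<phi> (cmod (y \<omega>))) \<partial>\<mu>) \<le> 1" .
  have "\<forall>\<omega>. f \<omega> = of_nat n * y \<omega>" unfolding y_def using npos by simp
  then show "f \<in> orlicz \<mu> \<phi>" unfolding orlicz_def using ym I f meas_ops_def
    by blast
qed

lemma ind_A: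
  assumes x: "x \<in> A" and R: "R \<in> sets \<mu>"
  shows "(\<lambda>t. indicator R t * x t) \<in> A"
  unfolding orlicz_inter_def
proof (intro CollectI conjI ballI)
  have xm: "x \<in> borel_measurable \<mu>" using x by (rule A_meas)
  show "(\<lambda>t. indicator R t * x t) \<in> meas_ops \<mu>" unfolding meas_ops_def using xm R by measurable
  fix \<phi> assume ph: "\<phi> \<in> \<Lambda>"
  then have "x \<in> orlicz \<mu> \<phi>" using x unfolding orlicz_inter_def by blast
  then obtain n :: nat and y where y: "y \<in> meas_ops \<mu>"
    and I: "(\<integral>\<^sup>+ \<omega>. ennreal (\<phi> (cmod (y \<omega>))) \<partial>\<mu>) \<le> 1"
    and ae: "AE \<omega> in \<mu>. x \<omega> = of_nat n * y \<omega>"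
    unfolding orlicz_def by blast
  have p0: "\<phi> 0 = 0" using yf_props(1)[OF yf[OF ph]] .
  define y' where "y' = (\<lambda>t. indicator R t * y t)"
  have y': "y' \<in> meas_ops \<mu>" using y R unfolding meas_ops_def y'_def by measurable
  have "(\<integral>\<^sup>+ \<omega>. ennreal (\<phi> (cmod (y' \<omega>))) \<partial>\<mu>) \<le> (\<integral>\<^sup>+ \<omega>. ennreal (\<phi> (cmod (y \<omega>))) \<partial>\<mu>)"
    by (rule nn_integral_mono) (auto simp: y'_def indicator_def p0)
  with I have I': "(\<integral>\<^sup>+ \<omega>. ennreal (\<phi> (cmod (y' \<omega>))) \<partial>\<mu>) \<le> 1" by simp
  have "AE \<omega> in \<mu>. indicator R \<omega> * x \<omega> = of_nat n * y' \<omega>"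
    using ae by eventually_elim (simp add: y'_def)
  then show "(\<lambda>t. indicator R t * x t) \<in> orlicz \<mu> \<phi>"
    unfolding orlicz_def using y' I' \<open>(\<lambda>t. indicator R t * x t) \<in> meas_ops \<mu>\<close> by blast
qed

lemma A_fin:
  assumes x: "x \<in> A"
  shows "(\<integral>\<^sup>+ \<omega>. ennreal (cmod (x \<omega>)) \<partial>\<mu>) < \<infinity>"
proof -
  obtain \<phi> where ph: "\<phi> \<in> \<Lambda>" using ne by blast
  have yo: "young_function \<phi>" using ph by (rule yf)
  have "x \<in> orlicz \<mu> \<phi>" using x ph unfolding orlicz_inter_def by blast
  then obtain n :: nat and y where y: "y \<in> borel_measurable \<mu>"
    and I: "(\<integral>\<^sup>+ \<omega>. ennreal (\<phi> (cmod (y \<omega>))) \<partial>\<mu>) \<le> 1"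
    and ae: "AE \<omega> in \<mu>. x \<omega> = of_nat n * y \<omega>"
    unfolding orlicz_def meas_ops_def by blast
  obtain K where K0: "K > 0" and K: "\<forall>t\<ge>1. K * (t - 1) \<le> \<phi> t"
    using yf_props(4)[OF yo] by blast
  have pnn: "\<And>t. 0 \<le> t \<Longrightarrow> 0 \<le> \<phi> t" using yf_props(2)[OF yo] .
  have gm: "(\<lambda>\<omega>. ennreal (\<phi> (cmod (y \<omega>)))) \<in> borel_measurable \<mu>"
  proof -
    have "(\<lambda>\<omega>. ennreal ((\<lambda>t. \<phi> (max 0 t)) (cmod (y \<omega>)))) \<in> borel_measurable \<mu>"
      using yf_props(5)[OF yo] y by measurable
    then show ?thesis by simp
  qed
  have pt: "ennreal (cmod (y \<omega>)) \<le> 1 + ennreal (1 / K) * ennreal (\<phi> (cmod (y \<omega>)))" for \<omega>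
  proof -
    have "cmod (y \<omega>) \<le> 1 + (1 / K) * \<phi> (cmod (y \<omega>))"
    proof (cases "cmod (y \<omega>) \<le> 1")
      case True
      have "0 \<le> (1 / K) * \<phi> (cmod (y \<omega>))" using pnn[of "cmod (y \<omega>)"] K0 by simp
      then show ?thesis using True by linarith
    next
      case False
      then have "K * (cmod (y \<omega>) - 1) \<le> \<phi> (cmod (y \<omega>))" using K by simp
      then show ?thesis using K0 by (simp add: field_simps)
    qed
    then have "ennreal (cmod (y \<omega>)) \<le> ennreal (1 + (1 / K) * \<phi> (cmod (y \<omega>)))" by (rule ennreal_leI)
    also have "\<dots> = 1 + ennreal (1 / K) * ennreal (\<phi> (cmod (y \<omega>)))"
      using K0 pnn[of "cmod (y \<omega>)"] by (simp add: ennreal_plus ennreal_mult[symmetric])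
    finally show ?thesis .
  qed
  have "(\<integral>\<^sup>+ \<omega>. ennreal (cmod (y \<omega>)) \<partial>\<mu>) \<le> (\<integral>\<^sup>+ \<omega>. (1 + ennreal (1 / K) * ennreal (\<phi> (cmod (y \<omega>)))) \<partial>\<mu>)"
    by (rule nn_integral_mono) (rule pt)
  also have "\<dots> = (\<integral>\<^sup>+ \<omega>. 1 \<partial>\<mu>) + ennreal (1 / K) * (\<integral>\<^sup>+ \<omega>. ennreal (\<phi> (cmod (y \<omega>))) \<partial>\<mu>)"
    using gm by (simp add: nn_integral_add nn_integral_cmult)
  also have "\<dots> < \<infinity>"
  proof -
    have a: "(\<integral>\<^sup>+ \<omega>. 1 \<partial>\<mu>) < \<infinity>" using emeas_space by simp
    have "ennreal (1 / K) * (\<integral>\<^sup>+ \<omega>. ennreal (\<phi> (cmod (y \<omega>))) \<partial>\<mu>) \<le> ennreal (1 / K) * 1"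
      using I by (rule mult_left_mono) simp
    also have "\<dots> < \<infinity>" by simp
    finally show ?thesis using a by simp
  qed
  finally have fy: "(\<integral>\<^sup>+ \<omega>. ennreal (cmod (y \<omega>)) \<partial>\<mu>) < \<infinity>" .
  have "(\<integral>\<^sup>+ \<omega>. ennreal (cmod (x \<omega>)) \<partial>\<mu>) = (\<integral>\<^sup>+ \<omega>. ennreal (real n) * ennreal (cmod (y \<omega>)) \<partial>\<mu>)"
    by (rule nn_integral_cong_AE) (use ae in \<open>auto simp: norm_mult ennreal_mult\<close>)
  also have "\<dots> = ennreal (real n) * (\<integral>\<^sup>+ \<omega>. ennreal (cmod (y \<omega>)) \<partial>\<mu>)"
    using y by (simp add: nn_integral_cmult)
  also have "\<dots> < \<infinity>" using fy by (simp add: ennreal_mult_less_top)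
  finally show ?thesis .
qed

end



context Dv begin

definition bm :: "('a \<Rightarrow> complex) \<Rightarrow> bool" where
  "bm f \<longleftrightarrow> f \<in> borel_measurable \<mu> \<and> (\<exists>C. \<forall>\<omega>. cmod (f \<omega>) \<le> C)"

lemma bmI: "f \<in> borel_measurable \<mu> \<Longrightarrow> (\<And>\<omega>. cmod (f \<omega>) \<le> C) \<Longrightarrow> bm f"
  unfolding bm_def by blast

lemma bm_A: "bm f \<Longrightarrow> f \<in> A"
  unfolding bm_def using bnd_A by blast

lemma bm_add: "bm f \<Longrightarrow> bm g \<Longrightarrow> bm (\<lambda>t. f t + g t)"
proof -
  assume "bm f" "bm g"
  then obtain C D where f: "f \<in> borel_measurable \<mu>" "\<forall>\<omega>. cmod (f \<omega>) \<le> C"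
    and g: "g \<in> borel_measurable \<mu>" "\<forall>\<omega>. cmod (g \<omega>) \<le> D" unfolding bm_def by blast
  show ?thesis
  proof (rule bmI)
    show "(\<lambda>t. f t + g t) \<in> borel_measurable \<mu>" using f g by measurable
    fix \<omega>
    show "cmod (f \<omega> + g \<omega>) \<le> C + D"
      using f(2) g(2) norm_triangle_ineq[of "f \<omega>" "g \<omega>"] by (meson add_mono order_trans)
  qed
qed

lemma bm_mult: "bm f \<Longrightarrow> bm g \<Longrightarrow> bm (\<lambda>t. f t * g t)"
proof -
  assume "bm f" "bm g"
  then obtain C D where f: "f \<in> borel_measurable \<mu>" "\<forall>\<omega>. cmod (f \<omega>) \<le> C"
    and g: "g \<in> borel_measurable \<mu>" "\<forall>\<omega>. cmod (g \<omega>) \<le> D" unfolding bm_def by blast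
  show ?thesis
  proof (rule bmI)
    show "(\<lambda>t. f t * g t) \<in> borel_measurable \<mu>" using f g by measurable
    fix \<omega>
    have "cmod (f \<omega> * g \<omega>) = cmod (f \<omega>) * cmod (g \<omega>)" by (simp add: norm_mult)
    also have "\<dots> \<le> C * D" using f g by (meson mult_mono norm_ge_zero order_trans)
    finally show "cmod (f \<omega> * g \<omega>) \<le> C * D" .
  qed
qed

lemma bm_const: "bm (\<lambda>t. c)"
  by (rule bmI[of _ "cmod c"]) auto

lemma bm_ind: "R \<in> sets \<mu> \<Longrightarrow> bm (\<lambda>t. c * indicator R t)"
  by (rule bmI[of _ "cmod c"]) (auto simp: indicator_def)

lemma bm_neg: "bm f \<Longrightarrow> bm (\<lambda>t. - f t)"
  unfolding bm_def by auto

lemma d_in: "x \<in> A \<Longrightarrow> \<delta> x \<in> A"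
  using der unfolding additive_derivation_def by blast
lemma d_cong: "x \<in> A \<Longrightarrow> y \<in> A \<Longrightarrow> (AE \<omega> in \<mu>. x \<omega> = y \<omega>) \<Longrightarrow> AE \<omega> in \<mu>. \<delta> x \<omega> = \<delta> y \<omega>"
  using der unfolding additive_derivation_def by blast
lemma d_add: "x \<in> A \<Longrightarrow> y \<in> A \<Longrightarrow> AE \<omega> in \<mu>. \<delta> (\<lambda>t. x t + y t) \<omega> = \<delta> x \<omega> + \<delta> y \<omega>"
  using der unfolding additive_derivation_def by blast
lemma d_mult: "x \<in> A \<Longrightarrow> y \<in> A \<Longrightarrow> AE \<omega> in \<mu>. \<delta> (\<lambda>t. x t * y t) \<omega> = \<delta> x \<omega> * y \<omega> + x \<omega> * \<delta> y \<omega>"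
  using der unfolding additive_derivation_def by blast

lemma d_zero: "AE \<omega> in \<mu>. \<delta> (\<lambda>t. 0) \<omega> = 0"
proof -
  have z: "(\<lambda>t::'a. 0::complex) \<in> A" by (rule bm_A[OF bm_const])
  have "AE \<omega> in \<mu>. \<delta> (\<lambda>t. 0 + 0) \<omega> = \<delta> (\<lambda>t. 0) \<omega> + \<delta> (\<lambda>t. 0) \<omega>" by (rule d_add[OF z z])
  then show ?thesis by eventually_elim simp
qed

lemma d_neg: "bm f \<Longrightarrow> AE \<omega> in \<mu>. \<delta> (\<lambda>t. - f t) \<omega> = - \<delta> f \<omega>"
proof -
  assume f: "bm f"
  have "AE \<omega> in \<mu>. \<delta> (\<lambda>t. f t + - f t) \<omega> = \<delta> f \<omega> + \<delta> (\<lambda>t. - f t) \<omega>"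
    by (rule d_add[OF bm_A[OF f] bm_A[OF bm_neg[OF f]]])
  then show ?thesis using d_zero by eventually_elim (simp add: eq_neg_iff_add_eq_0 add.commute)
qed

lemma d_ind: assumes R: "R \<in> sets \<mu>" shows "AE \<omega> in \<mu>. \<delta> (\<lambda>t. indicator R t) \<omega> = 0"
proof -
  have i: "(\<lambda>t. indicator R t :: complex) \<in> A" using bm_A[OF bm_ind[OF R, of 1]] by simp
  have e: "(\<lambda>t. indicator R t * indicator R t :: complex) = (\<lambda>t. indicator R t)"
    by (auto simp: indicator_def)
  have "AE \<omega> in \<mu>. \<delta> (\<lambda>t. indicator R t * indicator R t) \<omega>
      = \<delta> (\<lambda>t. indicator R t) \<omega> * indicator R \<omega> + indicator R \<omega> * \<delta> (\<lambda>t. indicator R t) \<omega>"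
    by (rule d_mult[OF i i])
  then show ?thesis unfolding e
    by eventually_elim (case_tac "\<omega> \<in> R", simp_all)
qed

lemma d_iind: assumes R: "R \<in> sets \<mu>" shows "AE \<omega> in \<mu>. \<delta> (\<lambda>t. \<i> * indicator R t) \<omega> = 0"
proof -
  have i: "(\<lambda>t. indicator R t :: complex) \<in> A" using bm_A[OF bm_ind[OF R, of 1]] by simp
  have j: "(\<lambda>t. \<i> * indicator R t) \<in> A" using bm_A[OF bm_ind[OF R]] by simp
  have e1: "(\<lambda>t. \<i> * indicator R t * (\<i> * indicator R t)) = (\<lambda>t. - indicator R t)"
    by (auto simp: indicator_def)
  have e2: "(\<lambda>t. \<i> * indicator R t * indicator R t) = (\<lambda>t. \<i> * indicator R t)"
    by (auto simp: indicator_def)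
  have a1: "AE \<omega> in \<mu>. \<delta> (\<lambda>t. \<i> * indicator R t * (\<i> * indicator R t)) \<omega>
      = \<delta> (\<lambda>t. \<i> * indicator R t) \<omega> * (\<i> * indicator R \<omega>) + (\<i> * indicator R \<omega>) * \<delta> (\<lambda>t. \<i> * indicator R t) \<omega>"
    by (rule d_mult[OF j j])
  have a2: "AE \<omega> in \<mu>. \<delta> (\<lambda>t. \<i> * indicator R t * indicator R t) \<omega>
      = \<delta> (\<lambda>t. \<i> * indicator R t) \<omega> * indicator R \<omega> + (\<i> * indicator R \<omega>) * \<delta> (\<lambda>t. indicator R t) \<omega>"
    by (rule d_mult[OF j i])
  have a3: "AE \<omega> in \<mu>. \<delta> (\<lambda>t. - indicator R t) \<omega> = - \<delta> (\<lambda>t. indicator R t) \<omega>"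
    using d_neg[OF bm_ind[OF R, of 1]] by simp
  from a1 a2 a3 d_ind[OF R] show ?thesis unfolding e1 e2
    by eventually_elim (case_tac "\<omega> \<in> R", simp_all)
qed

lemma d_indmult:
  assumes x: "x \<in> A" and R: "R \<in> sets \<mu>"
  shows "AE \<omega> in \<mu>. \<delta> (\<lambda>t. indicator R t * x t) \<omega> = indicator R \<omega> * \<delta> x \<omega>"
proof -
  have i: "(\<lambda>t. indicator R t :: complex) \<in> A" using bm_A[OF bm_ind[OF R, of 1]] by simp
  from d_mult[OF i x] d_ind[OF R] show ?thesis by eventually_elim simp
qed

lemma d_nat: assumes f: "bm f" shows "AE \<omega> in \<mu>. \<delta> (\<lambda>t. of_nat k * f t) \<omega> = of_nat k * \<delta> f \<omega>"
proof (induction k)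
  case 0
  then show ?case using d_zero by simp
next
  case (Suc k)
  have e: "(\<lambda>t. of_nat (Suc k) * f t) = (\<lambda>t. f t + of_nat k * f t)"
    by (auto simp: algebra_simps)
  have b: "bm (\<lambda>t. of_nat k * f t)" using bm_mult[OF bm_const f] .
  from d_add[OF bm_A[OF f] bm_A[OF b]] Suc show ?case unfolding e
    by eventually_elim (simp add: algebra_simps)
qed

lemma d_int:
  assumes cind: "\<And>R. R \<in> sets \<mu> \<Longrightarrow> AE \<omega> in \<mu>. \<delta> (\<lambda>t. c * indicator R t) \<omega> = 0"
  shows "h \<in> measurable \<mu> (count_space UNIV) \<Longrightarrow> (\<And>t. \<bar>h t\<bar> \<le> int N) \<Longrightarrow>
    AE \<omega> in \<mu>. \<delta> (\<lambda>t. c * of_int (h t)) \<omega> = 0"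
proof (induction N arbitrary: h)
  case 0
  then have "(\<lambda>t. c * of_int (h t)) = (\<lambda>t. 0)" by auto
  then show ?case using d_zero by simp
next
  case (Suc N)
  have hm: "h \<in> measurable \<mu> (count_space UNIV)" by fact
  define h' where "h' = (\<lambda>t. max (- int N) (min (int N) (h t)))"
  define R1 where "R1 = {t \<in> space \<mu>. h t = int (Suc N)}"
  define R2 where "R2 = {t \<in> space \<mu>. h t = - int (Suc N)}"
  have h'm: "h' \<in> measurable \<mu> (count_space UNIV)" unfolding h'_def using hm by measurable
  have R1: "R1 \<in> sets \<mu>" unfolding R1_def using hm by measurable
  have R2: "R2 \<in> sets \<mu>" unfolding R2_def using hm by measurable
  have bh: "bm (\<lambda>t. c * of_int (h t))"
  proof (rule bmI[of _ "cmod c * real (Suc N)"])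
    show "(\<lambda>t. c * of_int (h t)) \<in> borel_measurable \<mu>" using hm by measurable
    fix t
    have "\<bar>real_of_int (h t)\<bar> \<le> real (Suc N)" using Suc.prems(2)[of t] by linarith
    then show "cmod (c * of_int (h t)) \<le> cmod c * real (Suc N)"
      by (simp add: norm_mult mult_left_mono)
  qed
  have bh': "bm (\<lambda>t. c * of_int (h' t))"
  proof (rule bmI[of _ "cmod c * real N"])
    show "(\<lambda>t. c * of_int (h' t)) \<in> borel_measurable \<mu>" using h'm by measurable
    fix t
    have "\<bar>real_of_int (h' t)\<bar> \<le> real N" unfolding h'_def by linarith
    then show "cmod (c * of_int (h' t)) \<le> cmod c * real N"
      by (simp add: norm_mult mult_left_mono)
  qed
  have IH: "AE \<omega> in \<mu>. \<delta> (\<lambda>t. c * of_int (h' t)) \<omega> = 0"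
    by (rule Suc.IH[OF h'm]) (simp add: h'_def)
  define F where "F = (\<lambda>t. c * of_int (h' t) + (c * indicator R1 t + - (c * indicator R2 t)))"
  have b1: "bm (\<lambda>t. c * indicator R1 t)" by (rule bm_ind[OF R1])
  have b2: "bm (\<lambda>t. - (c * indicator R2 t))" by (rule bm_neg[OF bm_ind[OF R2]])
  have b12: "bm (\<lambda>t. c * indicator R1 t + - (c * indicator R2 t))" by (rule bm_add[OF b1 b2])
  have bF: "bm F" unfolding F_def by (rule bm_add[OF bh' b12])
  have eq: "AE \<omega> in \<mu>. c * of_int (h \<omega>) = F \<omega>"
  proof (rule AE_I2)
    fix t assume "t \<in> space \<mu>"
    assume sp: "t \<in> space \<mu>"
    have ii: "h t = h' t + (if h t = int (Suc N) then 1 else 0) - (if h t = - int (Suc N) then 1 else 0)"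
      using Suc.prems(2)[of t] unfolding h'_def by auto
    have "(of_int (h t) :: complex) = of_int (h' t) + indicator R1 t - indicator R2 t"
      using sp by (subst ii) (auto simp: R1_def R2_def indicator_def)
    then show "c * of_int (h t) = F t"
      unfolding F_def by (simp add: ring_distribs)
  qed
  have A1: "AE \<omega> in \<mu>. \<delta> (\<lambda>t. c * of_int (h t)) \<omega> = \<delta> F \<omega>"
    by (rule d_cong[OF bm_A[OF bh] bm_A[OF bF] eq])
  have A2: "AE \<omega> in \<mu>. \<delta> F \<omega> = \<delta> (\<lambda>t. c * of_int (h' t)) \<omega> + \<delta> (\<lambda>t. c * indicator R1 t + - (c * indicator R2 t)) \<omega>"
    unfolding F_def by (rule d_add[OF bm_A[OF bh'] bm_A[OF b12]])
  have A3: "AE \<omega> in \<mu>. \<delta> (\<lambda>t. c * indicator R1 t + - (c * indicator R2 t)) \<omega>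
     = \<delta> (\<lambda>t. c * indicator R1 t) \<omega> + \<delta> (\<lambda>t. - (c * indicator R2 t)) \<omega>"
    by (rule d_add[OF bm_A[OF b1] bm_A[OF b2]])
  have A4: "AE \<omega> in \<mu>. \<delta> (\<lambda>t. - (c * indicator R2 t)) \<omega> = - \<delta> (\<lambda>t. c * indicator R2 t) \<omega>"
    by (rule d_neg[OF bm_ind[OF R2]])
  from A1 A2 A3 A4 IH cind[OF R1] cind[OF R2] show ?case
    by eventually_elim simp
qed

end



context Dv begin

lemma floor_bound:
  fixes x K :: real
  assumes "\<bar>x\<bar> \<le> K"
  shows "\<bar>\<lfloor>x\<rfloor>\<bar> \<le> int (nat \<lceil>K\<rceil> + 1)"
proof -
  have "real_of_int \<lfloor>x\<rfloor> \<le> x" by (rule of_int_floor_le)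
  moreover have "x < real_of_int (\<lfloor>x\<rfloor> + 1)" using floor_correct[of x] by simp
  moreover have "K \<le> real_of_int \<lceil>K\<rceil>" by (rule le_of_int_ceiling)
  ultimately have "real_of_int \<bar>\<lfloor>x\<rfloor>\<bar> \<le> real_of_int (\<lceil>K\<rceil> + 1)" using assms by linarith
  then have "\<bar>\<lfloor>x\<rfloor>\<bar> \<le> \<lceil>K\<rceil> + 1" by linarith
  moreover have "0 \<le> \<lceil>K\<rceil>"
  proof -
    have "0 \<le> real_of_int \<lceil>K\<rceil>" using le_of_int_ceiling[of K] abs_ge_zero[of x] assms by linarith
    then show ?thesis by simp
  qed
  ultimately show ?thesis by simp
qed

lemma d_gint:
  assumes w: "bm w"
  shows "AE \<omega> in \<mu>. \<delta> (\<lambda>t. 1 * of_int \<lfloor>real k * Re (w t)\<rfloor> + \<i> * of_int \<lfloor>real k * Im (w t)\<rfloor>) \<omega> = 0"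
proof -
  obtain C where wm: "w \<in> borel_measurable \<mu>" and C: "\<And>\<omega>. cmod (w \<omega>) \<le> C" using w unfolding bm_def by blast
  define N where "N = nat \<lceil>real k * C\<rceil> + 1"
  define h1 where "h1 = (\<lambda>t. \<lfloor>real k * Re (w t)\<rfloor>)"
  define h2 where "h2 = (\<lambda>t. \<lfloor>real k * Im (w t)\<rfloor>)"
  have h1m: "h1 \<in> measurable \<mu> (count_space UNIV)" unfolding h1_def using wm by measurable
  have h2m: "h2 \<in> measurable \<mu> (count_space UNIV)" unfolding h2_def using wm by measurable
  have rb: "\<bar>real k * Re (w t)\<bar> \<le> real k * C" for t
    using abs_Re_le_cmod[of "w t"] C[of t] by (simp add: abs_mult mult_left_mono)
  have ib: "\<bar>real k * Im (w t)\<bar> \<le> real k * C" for t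
    using abs_Im_le_cmod[of "w t"] C[of t] by (simp add: abs_mult mult_left_mono)
  have b1: "\<bar>h1 t\<bar> \<le> int N" for t unfolding h1_def N_def by (rule floor_bound[OF rb])
  have b2: "\<bar>h2 t\<bar> \<le> int N" for t unfolding h2_def N_def by (rule floor_bound[OF ib])
  have c1: "AE \<omega> in \<mu>. \<delta> (\<lambda>t. 1 * indicator R t) \<omega> = 0" if "R \<in> sets \<mu>" for R
    using d_ind[OF that] by simp
  have z1: "AE \<omega> in \<mu>. \<delta> (\<lambda>t. 1 * of_int (h1 t)) \<omega> = 0"
    by (rule d_int[OF c1 h1m b1])
  have z2: "AE \<omega> in \<mu>. \<delta> (\<lambda>t. \<i> * of_int (h2 t)) \<omega> = 0"
    by (rule d_int[OF d_iind h2m b2])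
  have bb1: "bm (\<lambda>t. 1 * of_int (h1 t))"
  proof (rule bmI[of _ "real N"])
    show "(\<lambda>t. 1 * of_int (h1 t)) \<in> borel_measurable \<mu>" using h1m by measurable
    fix t show "cmod (1 * complex_of_int (h1 t)) \<le> real N" using b1[of t] by (simp; linarith)
  qed
  have bb2: "bm (\<lambda>t. \<i> * of_int (h2 t))"
  proof (rule bmI[of _ "real N"])
    show "(\<lambda>t. \<i> * of_int (h2 t)) \<in> borel_measurable \<mu>" using h2m by measurable
    fix t show "cmod (\<i> * complex_of_int (h2 t)) \<le> real N" using b2[of t] by (simp add: norm_mult; linarith)
  qed
  from d_add[OF bm_A[OF bb1] bm_A[OF bb2]] z1 z2 show ?thesis
    unfolding h1_def h2_def by eventually_elim simp
qed

lemma amplify: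
  assumes w: "bm w" and wP: "\<And>\<omega>. \<omega> \<notin> P \<Longrightarrow> w \<omega> = 0"
    and nz: "\<not> (AE \<omega> in \<mu>. \<delta> w \<omega> = 0)"
  shows "\<exists>u. bm u \<and> (\<forall>\<omega>. cmod (u \<omega>) \<le> 2) \<and> (\<forall>\<omega>. \<omega> \<notin> P \<longrightarrow> u \<omega> = 0)
     \<and> 1 \<le> (\<integral>\<^sup>+ \<omega>. ennreal (cmod (\<delta> u \<omega>)) \<partial>\<mu>)"
proof -
  have dwA: "\<delta> w \<in> A" by (rule d_in[OF bm_A[OF w]])
  have dwm: "\<delta> w \<in> borel_measurable \<mu>" by (rule A_meas[OF dwA])
  define a where "a = (\<integral>\<^sup>+ \<omega>. ennreal (cmod (\<delta> w \<omega>)) \<partial>\<mu>)"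
  have a0: "a \<noteq> 0"
  proof
    assume "a = 0"
    then have "AE \<omega> in \<mu>. ennreal (cmod (\<delta> w \<omega>)) = 0"
      unfolding a_def using dwm by (subst nn_integral_0_iff_AE[symmetric]) auto
    then have "AE \<omega> in \<mu>. \<delta> w \<omega> = 0" by eventually_elim simp
    with nz show False by simp
  qed
  have afin: "a < \<infinity>" unfolding a_def by (rule A_fin[OF dwA])
  obtain r where r: "a = ennreal r" "0 \<le> r" using afin by (cases a) auto
  have rpos: "0 < r" using a0 r by (auto simp: order.order_iff_strict)
  obtain k :: nat where k: "1 / r \<le> real k" using real_arch_simple by blast
  have ka: "1 \<le> ennreal (real k) * a"
  proof -
    have "1 \<le> real k * r" using k rpos by (simp add: field_simps)
    then have "ennreal 1 \<le> ennreal (real k * r)" by (rule ennreal_leI)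
    then show ?thesis using r by (simp add: ennreal_mult)
  qed
  define g where "g = (\<lambda>t. 1 * of_int \<lfloor>real k * Re (w t)\<rfloor> + \<i> * of_int \<lfloor>real k * Im (w t)\<rfloor>)"
  define u where "u = (\<lambda>t. of_nat k * w t - g t)"
  obtain C where wm: "w \<in> borel_measurable \<mu>" and C: "\<And>\<omega>. cmod (w \<omega>) \<le> C" using w unfolding bm_def by blast
  have ub: "cmod (u \<omega>) \<le> 2" for \<omega>
  proof -
    have "\<bar>Re (u \<omega>)\<bar> \<le> 1"
    proof -
      define z where "z = real k * Re (w \<omega>)"
      have f1: "real_of_int \<lfloor>z\<rfloor> \<le> z" by simp
      have f2: "z < real_of_int \<lfloor>z\<rfloor> + 1" using floor_correct[of z] by simp
      have "Re (u \<omega>) = z - real_of_int \<lfloor>z\<rfloor>" unfolding u_def g_def z_def by simp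
      then show ?thesis using f1 f2 by linarith
    qed
    moreover have "\<bar>Im (u \<omega>)\<bar> \<le> 1"
    proof -
      define z where "z = real k * Im (w \<omega>)"
      have f1: "real_of_int \<lfloor>z\<rfloor> \<le> z" by simp
      have f2: "z < real_of_int \<lfloor>z\<rfloor> + 1" using floor_correct[of z] by simp
      have "Im (u \<omega>) = z - real_of_int \<lfloor>z\<rfloor>" unfolding u_def g_def z_def by simp
      then show ?thesis using f1 f2 by linarith
    qed
    ultimately show ?thesis using cmod_le[of "u \<omega>"] by linarith
  qed
  have um: "u \<in> borel_measurable \<mu>" unfolding u_def g_def using wm by measurable
  have bu: "bm u" by (rule bmI[OF um ub])
  have bg: "bm g"
  proof (rule bmI[of _ "real k * C + 2"])
    show "g \<in> borel_measurable \<mu>" unfolding g_def using wm by measurable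
    fix \<omega>
    have "g \<omega> = of_nat k * w \<omega> - u \<omega>" unfolding u_def by simp
    then have "cmod (g \<omega>) \<le> cmod (of_nat k * w \<omega>) + cmod (u \<omega>)" by (simp add: norm_triangle_ineq4)
    also have "\<dots> \<le> real k * C + 2" using ub[of \<omega>] C[of \<omega>]
      by (simp add: norm_mult mult_left_mono add_mono)
    finally show "cmod (g \<omega>) \<le> real k * C + 2" .
  qed
  have uP: "\<forall>\<omega>. \<omega> \<notin> P \<longrightarrow> u \<omega> = 0" using wP unfolding u_def g_def by simp
  have e: "(\<lambda>t. of_nat k * w t) = (\<lambda>t. g t + u t)" unfolding u_def by simp
  have D1: "AE \<omega> in \<mu>. \<delta> (\<lambda>t. of_nat k * w t) \<omega> = of_nat k * \<delta> w \<omega>" by (rule d_nat[OF w])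
  have D2: "AE \<omega> in \<mu>. \<delta> (\<lambda>t. g t + u t) \<omega> = \<delta> g \<omega> + \<delta> u \<omega>" by (rule d_add[OF bm_A[OF bg] bm_A[OF bu]])
  have D3: "AE \<omega> in \<mu>. \<delta> g \<omega> = 0" unfolding g_def by (rule d_gint[OF w])
  have "AE \<omega> in \<mu>. \<delta> u \<omega> = of_nat k * \<delta> w \<omega>"
    using D1 D2 D3 unfolding e by eventually_elim simp
  then have "(\<integral>\<^sup>+ \<omega>. ennreal (cmod (\<delta> u \<omega>)) \<partial>\<mu>) = (\<integral>\<^sup>+ \<omega>. ennreal (real k) * ennreal (cmod (\<delta> w \<omega>)) \<partial>\<mu>)"
    by (intro nn_integral_cong_AE) (auto elim!: eventually_mono simp: norm_mult ennreal_mult)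
  also have "\<dots> = ennreal (real k) * a" unfolding a_def using dwm by (simp add: nn_integral_cmult)
  finally have "1 \<le> (\<integral>\<^sup>+ \<omega>. ennreal (cmod (\<delta> u \<omega>)) \<partial>\<mu>)" using ka by simp
  then show ?thesis using bu ub uP by blast
qed

end



context Dv begin

abbreviation "fx W \<equiv> proj_fixes \<mu> A \<delta> W"

lemma fix_space: "fx (space \<mu>)"
  unfolding proj_fixes_def by (auto intro!: AE_I2)

lemma fix_sets: "fx W \<Longrightarrow> W \<in> sets \<mu>"
  unfolding proj_fixes_def by blast

lemma fix_Inter:
  assumes W: "\<And>n::nat. fx (W n)"
  shows "fx (\<Inter>n. W n)"
  unfolding proj_fixes_def
proof (intro conjI ballI)
  show "(\<Inter>n. W n) \<in> sets \<mu>" using W fix_sets by blast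
  fix x assume x: "x \<in> A"
  have "\<forall>n. AE \<omega> in \<mu>. indicator (W n) \<omega> * \<delta> x \<omega> = \<delta> x \<omega>"
    using W x unfolding proj_fixes_def by blast
  then have "AE \<omega> in \<mu>. \<forall>n. indicator (W n) \<omega> * \<delta> x \<omega> = \<delta> x \<omega>"
    by (subst AE_all_countable) simp
  then show "AE \<omega> in \<mu>. indicator (\<Inter>n. W n) \<omega> * \<delta> x \<omega> = \<delta> x \<omega>"
  proof eventually_elim
    case (elim \<omega>)
    show ?case
    proof (cases "\<delta> x \<omega> = 0")
      case False
      then have "\<forall>n. \<omega> \<in> W n" using elim by (metis indicator_simps(2) mult_eq_0_iff)
      then show ?thesis by simp
    qed simp
  qed
qed

lemma fix_Int:
  assumes "fx W1" "fx W2" shows "fx (W1 \<inter> W2)"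
proof -
  have "fx (\<Inter>n::nat. if n = 0 then W1 else W2)" using assms by (intro fix_Inter) auto
  moreover have "(\<Inter>n::nat. if n = 0 then W1 else W2) = W1 \<inter> W2"
    by (auto split: if_splits)
  ultimately show ?thesis by simp
qed

lemma support_exists:
  "\<exists>Z. fx Z \<and> (\<forall>W. fx W \<longrightarrow> (AE \<omega> in \<mu>. \<omega> \<in> Z \<longrightarrow> \<omega> \<in> W))"
proof -
  interpret finite_measure \<mu> by (rule fm)
  define F where "F = {W. fx W}"
  define m where "m = (INF W\<in>F. measure \<mu> W)"
  have Fne: "F \<noteq> {}" using fix_space unfolding F_def by blast
  have bdd: "bdd_below ((\<lambda>W. measure \<mu> W) ` F)" by (rule bdd_belowI[of _ 0]) auto
  have "\<exists>W\<in>F. measure \<mu> W < m + 1 / (Suc n)" for n :: nat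
  proof -
    have "m < m + 1 / Suc n" by simp
    then show ?thesis unfolding m_def using cINF_less_iff[OF Fne bdd] by blast
  qed
  then obtain W where WF: "\<And>n. W n \<in> F" and Wm: "\<And>n. measure \<mu> (W n) < m + 1 / Suc n"
    by metis
  define Z where "Z = (\<Inter>n. W n)"
  have ZF: "fx Z" unfolding Z_def using WF F_def by (intro fix_Inter) auto
  have Zs: "Z \<in> sets \<mu>" using ZF fix_sets by blast
  have Zle: "measure \<mu> Z \<le> m"
  proof (rule field_le_epsilon)
    fix e :: real assume "0 < e"
    then obtain n :: nat where n: "1 / Suc n < e"
      using nat_approx_posE by blast
    have "measure \<mu> Z \<le> measure \<mu> (W n)"
      using WF F_def fix_sets Z_def by (intro finite_measure_mono) auto
    then show "measure \<mu> Z \<le> m + e" using Wm[of n] n by linarith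
  qed
  show ?thesis
  proof (intro exI conjI allI impI)
    show "fx Z" by fact
    fix V assume V: "fx V"
    have Vs: "V \<in> sets \<mu>" using V fix_sets by blast
    have "fx (Z \<inter> V)" by (rule fix_Int[OF ZF V])
    then have "m \<le> measure \<mu> (Z \<inter> V)" unfolding m_def using bdd F_def by (intro cINF_lower) auto
    then have "measure \<mu> (Z - V) = 0"
      using finite_measure_Diff'[OF Zs Vs] Zle measure_nonneg[of \<mu> "Z - V"] by linarith
    then have "Z - V \<in> null_sets \<mu>" using Zs Vs by (simp add: emeasure_eq_measure null_sets_def)
    from AE_not_in[OF this] show "AE \<omega> in \<mu>. \<omega> \<in> Z \<longrightarrow> \<omega> \<in> V" by eventually_elim auto
  qed
qed

end



context Dv begin

lemma piece:
  assumes Zf: "fx Z" and Zmin: "\<And>W. fx W \<Longrightarrow> AE \<omega> in \<mu>. \<omega> \<in> Z \<longrightarrow> \<omega> \<in> W"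
    and P: "P \<in> sets \<mu>" "P \<subseteq> Z" "emeasure \<mu> P \<noteq> 0"
  shows "\<exists>u. bm u \<and> (\<forall>\<omega>. cmod (u \<omega>) \<le> 2) \<and> (\<forall>\<omega>. \<omega> \<notin> P \<longrightarrow> u \<omega> = 0)
     \<and> 1 \<le> (\<integral>\<^sup>+ \<omega>. ennreal (cmod (\<delta> u \<omega>)) \<partial>\<mu>)"
proof -
  have Zs: "Z \<in> sets \<mu>" using Zf fix_sets by blast
  have nf: "\<not> fx (Z - P)"
  proof
    assume "fx (Z - P)"
    from Zmin[OF this] have "AE \<omega> in \<mu>. \<omega> \<notin> P" by eventually_elim (use P in auto)
    then have "emeasure \<mu> P = 0"
      using AE_iff_measurable[OF P(1), of "\<lambda>\<omega>. \<omega> \<notin> P"] sets.sets_into_space[OF P(1)] by auto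
    with P(3) show False by simp
  qed
  then obtain x where x: "x \<in> A" and nx: "\<not> (AE \<omega> in \<mu>. indicator (Z - P) \<omega> * \<delta> x \<omega> = \<delta> x \<omega>)"
    using Zs P(1) unfolding proj_fixes_def by blast
  have zx: "AE \<omega> in \<mu>. indicator Z \<omega> * \<delta> x \<omega> = \<delta> x \<omega>" using Zf x unfolding proj_fixes_def by blast
  have n1: "\<not> (AE \<omega> in \<mu>. \<omega> \<in> P \<longrightarrow> \<delta> x \<omega> = 0)"
  proof
    assume "AE \<omega> in \<mu>. \<omega> \<in> P \<longrightarrow> \<delta> x \<omega> = 0"
    then have "AE \<omega> in \<mu>. indicator (Z - P) \<omega> * \<delta> x \<omega> = \<delta> x \<omega>"
      using zx by eventually_elim (auto simp: indicator_def split: if_splits)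
    with nx show False by simp
  qed
  have "\<exists>N::nat. \<not> (AE \<omega> in \<mu>. \<omega> \<in> P \<and> cmod (x \<omega>) \<le> real N \<longrightarrow> \<delta> x \<omega> = 0)"
  proof (rule ccontr)
    assume "\<not> ?thesis"
    then have "\<forall>N::nat. AE \<omega> in \<mu>. \<omega> \<in> P \<and> cmod (x \<omega>) \<le> real N \<longrightarrow> \<delta> x \<omega> = 0" by blast
    then have "AE \<omega> in \<mu>. \<forall>N::nat. \<omega> \<in> P \<and> cmod (x \<omega>) \<le> real N \<longrightarrow> \<delta> x \<omega> = 0"
      by (subst AE_all_countable) simp
    then have "AE \<omega> in \<mu>. \<omega> \<in> P \<longrightarrow> \<delta> x \<omega> = 0"
    proof eventually_elim
      case (elim \<omega>)
      obtain N :: nat where "cmod (x \<omega>) \<le> real N" using real_arch_simple by blast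
      then show ?case using elim by blast
    qed
    with n1 show False by simp
  qed
  then obtain N :: nat where nN: "\<not> (AE \<omega> in \<mu>. \<omega> \<in> P \<and> cmod (x \<omega>) \<le> real N \<longrightarrow> \<delta> x \<omega> = 0)"
    by blast
  have xm: "x \<in> borel_measurable \<mu>" by (rule A_meas[OF x])
  define R where "R = P \<inter> {\<omega> \<in> space \<mu>. cmod (x \<omega>) \<le> real N}"
  have Rs: "R \<in> sets \<mu>" unfolding R_def using P(1) xm by measurable
  define w where "w = (\<lambda>t. indicator R t * x t)"
  have bw: "bm w"
  proof (rule bmI[of _ "real N"])
    show "w \<in> borel_measurable \<mu>" unfolding w_def using Rs xm by measurable
    fix \<omega> show "cmod (w \<omega>) \<le> real N" unfolding w_def R_def by (auto simp: indicator_def)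
  qed
  have wP: "\<And>\<omega>. \<omega> \<notin> P \<Longrightarrow> w \<omega> = 0" unfolding w_def R_def by simp
  have dw: "AE \<omega> in \<mu>. \<delta> w \<omega> = indicator R \<omega> * \<delta> x \<omega>" unfolding w_def by (rule d_indmult[OF x Rs])
  have nz: "\<not> (AE \<omega> in \<mu>. \<delta> w \<omega> = 0)"
  proof
    assume "AE \<omega> in \<mu>. \<delta> w \<omega> = 0"
    with dw AE_space have "AE \<omega> in \<mu>. \<omega> \<in> P \<and> cmod (x \<omega>) \<le> real N \<longrightarrow> \<delta> x \<omega> = 0"
      by eventually_elim (auto simp: R_def)
    with nN show False by simp
  qed
  show ?thesis by (rule amplify[OF bw wP nz])
qed

end



context Dv begin

lemma finitary:
  assumes Zf: "fx Z" and Zmin: "\<And>W. fx W \<Longrightarrow> AE \<omega> in \<mu>. \<omega> \<in> Z \<longrightarrow> \<omega> \<in> W"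
    and P: "\<And>n::nat. P n \<in> sets \<mu>" "\<And>n. P n \<subseteq> Z" "\<And>n. emeasure \<mu> (P n) \<noteq> 0"
    and dj: "disjoint_family P"
  shows False
proof -
  have "\<forall>n. \<exists>u. bm u \<and> (\<forall>\<omega>. cmod (u \<omega>) \<le> 2) \<and> (\<forall>\<omega>. \<omega> \<notin> P n \<longrightarrow> u \<omega> = 0)
     \<and> 1 \<le> (\<integral>\<^sup>+ \<omega>. ennreal (cmod (\<delta> u \<omega>)) \<partial>\<mu>)"
    using piece[OF Zf Zmin P(1) P(2) P(3)] by blast
  then obtain u where ubm: "\<And>n. bm (u n)" and ub: "\<And>n \<omega>. cmod (u n \<omega>) \<le> 2"
    and uP: "\<And>n \<omega>. \<omega> \<notin> P n \<Longrightarrow> u n \<omega> = 0"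
    and u1: "\<And>n. 1 \<le> (\<integral>\<^sup>+ \<omega>. ennreal (cmod (\<delta> (u n) \<omega>)) \<partial>\<mu>)"
    by metis
  define y where "y = (\<lambda>\<omega>. \<Sum>n. u n \<omega>)"
  have yP: "y \<omega> = u j \<omega>" if "\<omega> \<in> P j" for \<omega> j
  proof -
    have "\<And>n. n \<notin> {j} \<Longrightarrow> u n \<omega> = 0"
      using uP that dj unfolding disjoint_family_on_def by blast
    then show ?thesis unfolding y_def by (subst suminf_finite[of "{j}"]) auto
  qed
  have ynP: "y \<omega> = 0" if "\<forall>j. \<omega> \<notin> P j" for \<omega>
    unfolding y_def using uP that by simp
  have yb: "cmod (y \<omega>) \<le> 2" for \<omega>
    by (cases "\<exists>j. \<omega> \<in> P j") (use yP ynP ub in auto)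
  have ym: "y \<in> borel_measurable \<mu>"
  proof -
    have "\<And>n. u n \<in> borel_measurable \<mu>" using ubm unfolding bm_def by blast
    then show ?thesis unfolding y_def by (rule borel_measurable_suminf)
  qed
  have by': "bm y" by (rule bmI[OF ym yb])
  have yA: "y \<in> A" by (rule bm_A[OF by'])
  have dyA: "\<delta> y \<in> A" by (rule d_in[OF yA])
  have dym: "\<delta> y \<in> borel_measurable \<mu>" by (rule A_meas[OF dyA])
  have fin: "(\<integral>\<^sup>+ \<omega>. ennreal (cmod (\<delta> y \<omega>)) \<partial>\<mu>) < \<infinity>" by (rule A_fin[OF dyA])
  have pj: "1 \<le> (\<integral>\<^sup>+ \<omega> \<in> P j. ennreal (cmod (\<delta> y \<omega>)) \<partial>\<mu>)" for j
  proof -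
    have e: "(\<lambda>t. indicator (P j) t * y t) = u j"
    proof
      fix t show "indicator (P j) t * y t = u j t"
        by (cases "t \<in> P j") (auto simp: yP uP)
    qed
    have "AE \<omega> in \<mu>. \<delta> (u j) \<omega> = indicator (P j) \<omega> * \<delta> y \<omega>"
      using d_indmult[OF yA P(1)[of j]] unfolding e .
    then have "(\<integral>\<^sup>+ \<omega>. ennreal (cmod (\<delta> (u j) \<omega>)) \<partial>\<mu>) = (\<integral>\<^sup>+ \<omega> \<in> P j. ennreal (cmod (\<delta> y \<omega>)) \<partial>\<mu>)"
      by (intro nn_integral_cong_AE) (auto elim!: eventually_mono simp: indicator_def norm_mult)
    then show ?thesis using u1[of j] by simp
  qed
  have "(\<integral>\<^sup>+ \<omega> \<in> (\<Union>n. P n). ennreal (cmod (\<delta> y \<omega>)) \<partial>\<mu>) = (\<Sum>n. (\<integral>\<^sup>+ \<omega> \<in> P n. ennreal (cmod (\<delta> y \<omega>)) \<partial>\<mu>))"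
    by (rule nn_integral_disjoint_family) (use dym P(1) dj in auto)
  moreover have "(\<integral>\<^sup>+ \<omega> \<in> (\<Union>n. P n). ennreal (cmod (\<delta> y \<omega>)) \<partial>\<mu>) \<le> (\<integral>\<^sup>+ \<omega>. ennreal (cmod (\<delta> y \<omega>)) \<partial>\<mu>)"
    by (rule nn_integral_mono) (auto simp: indicator_def)
  ultimately have S: "(\<Sum>n. (\<integral>\<^sup>+ \<omega> \<in> P n. ennreal (cmod (\<delta> y \<omega>)) \<partial>\<mu>)) \<le> (\<integral>\<^sup>+ \<omega>. ennreal (cmod (\<delta> y \<omega>)) \<partial>\<mu>)"
    by simp
  obtain r where r: "(\<integral>\<^sup>+ \<omega>. ennreal (cmod (\<delta> y \<omega>)) \<partial>\<mu>) = ennreal r" "0 \<le> r" using fin by (cases "(\<integral>\<^sup>+ \<omega>. ennreal (cmod (\<delta> y \<omega>)) \<partial>\<mu>)") auto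
  obtain N :: nat where N: "r < real N" using reals_Archimedean2 by blast
  have "ennreal (real N) = (\<Sum>n<N. (1::ennreal))" by (simp add: ennreal_of_nat_eq_real_of_nat)
  also have "\<dots> \<le> (\<Sum>n<N. (\<integral>\<^sup>+ \<omega> \<in> P n. ennreal (cmod (\<delta> y \<omega>)) \<partial>\<mu>))"
    by (rule sum_mono) (rule pj)
  also have "\<dots> \<le> (\<Sum>n. (\<integral>\<^sup>+ \<omega> \<in> P n. ennreal (cmod (\<delta> y \<omega>)) \<partial>\<mu>))"
    by (rule sum_le_suminf) auto
  also have "\<dots> \<le> ennreal r" using S r by simp
  finally have "real N \<le> r" using r(2) by (simp add: ennreal_le_iff)
  with N show False by simp
qed

end



definition atom :: "'a measure \<Rightarrow> 'a set \<Rightarrow> bool" where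
  "atom M Q \<longleftrightarrow> Q \<in> sets M \<and> emeasure M Q \<noteq> 0 \<and>
     (\<forall>S\<in>sets M. S \<subseteq> Q \<longrightarrow> emeasure M S = 0 \<or> emeasure M (Q - S) = 0)"

lemma atom_half:
  fixes g :: "'a \<Rightarrow> real"
  assumes fm: "finite_measure M" and Q: "atom M Q"
    and gm: "g \<in> borel_measurable M" and gb: "AE \<omega> in M. \<bar>g \<omega>\<bar> \<le> C"
  shows "AE \<omega> in M. \<omega> \<in> Q \<longrightarrow> g \<omega> \<le> (\<integral>\<omega>. indicator Q \<omega> * g \<omega> \<partial>M) / measure M Q"
proof -
  interpret finite_measure M by (rule fm)
  have Qs: "Q \<in> sets M" and Q0: "emeasure M Q \<noteq> 0"
    and Qa: "\<And>S. S \<in> sets M \<Longrightarrow> S \<subseteq> Q \<Longrightarrow> emeasure M S = 0 \<or> emeasure M (Q - S) = 0"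
    using Q unfolding atom_def by auto
  have mQ: "0 < measure M Q" using Q0 emeasure_eq_measure[of Q] measure_nonneg[of M Q]
    by (metis ennreal_0 order_le_less)
  define c where "c = (\<integral>\<omega>. indicator Q \<omega> * g \<omega> \<partial>M) / measure M Q"
  have ih: "integrable M (\<lambda>\<omega>. indicator Q \<omega> * g \<omega>)"
  proof (rule integrable_const_bound[where B="\<bar>C\<bar>"])
    show "AE x in M. norm (indicator Q x * g x) \<le> \<bar>C\<bar>"
      using gb by eventually_elim (auto simp: indicator_def)
  qed (use Qs gm in simp)
  have iQ: "integrable M (\<lambda>\<omega>. indicator Q \<omega> * c)"
    by (rule integrable_const_bound[where B="\<bar>c\<bar>"]) (use Qs in \<open>auto simp: indicator_def\<close>)
  define k where "k = (\<lambda>\<omega>. indicator Q \<omega> * g \<omega> - indicator Q \<omega> * c)"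
  have ik: "integrable M k" unfolding k_def using ih iQ by simp
  have intk: "integral\<^sup>L M k = 0"
  proof -
    have "integral\<^sup>L M k = (\<integral>\<omega>. indicator Q \<omega> * g \<omega> \<partial>M) - (\<integral>\<omega>. indicator Q \<omega> * c \<partial>M)"
      unfolding k_def using ih iQ by simp
    also have "(\<integral>\<omega>. indicator Q \<omega> * c \<partial>M) = measure M Q * c"
      using Qs by (simp add: Int_absorb2 sets.sets_into_space)
    finally show ?thesis unfolding c_def using mQ by simp
  qed
  define S where "S = {\<omega> \<in> space M. \<omega> \<in> Q \<and> c < g \<omega>}"
  have Ss: "S \<in> sets M" unfolding S_def using Qs gm by measurable
  have "emeasure M S = 0 \<or> emeasure M (Q - S) = 0" using Qa[OF Ss] S_def by auto
  then show ?thesis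
  proof
    assume "emeasure M S = 0"
    then have "S \<in> null_sets M" using Ss by auto
    from AE_not_in[OF this] show ?thesis unfolding c_def[symmetric]
      by (rule AE_mp) (auto intro!: AE_I2 simp: S_def)
  next
    assume e: "emeasure M (Q - S) = 0"
    then have "Q - S \<in> null_sets M" using Ss Qs by auto
    from AE_not_in[OF this] have gt: "AE \<omega> in M. \<omega> \<in> Q \<longrightarrow> c < g \<omega>"
      by (rule AE_mp) (auto intro!: AE_I2 simp: S_def)
    have "AE \<omega> in M. 0 \<le> k \<omega>" using gt by eventually_elim (auto simp: k_def indicator_def)
    with intk ik have "AE \<omega> in M. k \<omega> = 0" using integral_nonneg_eq_0_iff_AE by blast
    with gt have "AE \<omega> in M. \<omega> \<notin> Q" by eventually_elim (auto simp: k_def indicator_def)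
    then have "emeasure M Q = 0"
      using AE_iff_measurable[OF Qs, of "\<lambda>\<omega>. \<omega> \<notin> Q"] sets.sets_into_space[OF Qs] by auto
    with Q0 show ?thesis by simp
  qed
qed

lemma atom_const_real:
  fixes g :: "'a \<Rightarrow> real"
  assumes fm: "finite_measure M" and Q: "atom M Q"
    and gm: "g \<in> borel_measurable M" and gb: "AE \<omega> in M. \<bar>g \<omega>\<bar> \<le> C"
  shows "\<exists>c. AE \<omega> in M. \<omega> \<in> Q \<longrightarrow> g \<omega> = c"
proof -
  define c where "c = (\<integral>\<omega>. indicator Q \<omega> * g \<omega> \<partial>M) / measure M Q"
  have h1: "AE \<omega> in M. \<omega> \<in> Q \<longrightarrow> g \<omega> \<le> c"
    unfolding c_def by (rule atom_half[OF fm Q gm gb])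
  have gm2: "(\<lambda>\<omega>. - g \<omega>) \<in> borel_measurable M" using gm by measurable
  have gb2: "AE \<omega> in M. \<bar>- g \<omega>\<bar> \<le> C" using gb by simp
  have h2: "AE \<omega> in M. \<omega> \<in> Q \<longrightarrow> - g \<omega> \<le> (\<integral>\<omega>. indicator Q \<omega> * - g \<omega> \<partial>M) / measure M Q"
    using atom_half[OF fm Q gm2 gb2] by simp
  have e: "(\<lambda>\<omega>. indicator Q \<omega> * - g \<omega>) = (\<lambda>\<omega>. - (indicator Q \<omega> * g \<omega>))" by simp
  have "(\<integral>\<omega>. indicator Q \<omega> * - g \<omega> \<partial>M) / measure M Q = - c"
    unfolding c_def by (simp only: e integral_minus)
  with h2 have h2': "AE \<omega> in M. \<omega> \<in> Q \<longrightarrow> - g \<omega> \<le> - c" by simp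
  from h1 h2' have "AE \<omega> in M. \<omega> \<in> Q \<longrightarrow> g \<omega> = c"
    by eventually_elim auto
  then show ?thesis by blast
qed

lemma atom_const:
  fixes f :: "'a \<Rightarrow> complex"
  assumes fm: "finite_measure M" and Q: "atom M Q" and f: "f \<in> Linf M"
  shows "\<exists>c. AE \<omega> in M. \<omega> \<in> Q \<longrightarrow> f \<omega> = c"
proof -
  obtain C where fm': "f \<in> borel_measurable M" and fb: "AE \<omega> in M. cmod (f \<omega>) \<le> C"
    using f unfolding Linf_def by blast
  obtain c1 where c1: "AE \<omega> in M. \<omega> \<in> Q \<longrightarrow> Re (f \<omega>) = c1"
  proof -
    have "AE \<omega> in M. \<bar>Re (f \<omega>)\<bar> \<le> C"
      using fb by eventually_elim (rule order_trans[OF abs_Re_le_cmod])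
    moreover have "(\<lambda>\<omega>. Re (f \<omega>)) \<in> borel_measurable M" using fm' by measurable
    ultimately show ?thesis using that atom_const_real[OF fm Q] by blast
  qed
  obtain c2 where c2: "AE \<omega> in M. \<omega> \<in> Q \<longrightarrow> Im (f \<omega>) = c2"
  proof -
    have "AE \<omega> in M. \<bar>Im (f \<omega>)\<bar> \<le> C"
      using fb by eventually_elim (rule order_trans[OF abs_Im_le_cmod])
    moreover have "(\<lambda>\<omega>. Im (f \<omega>)) \<in> borel_measurable M" using fm' by measurable
    ultimately show ?thesis using that atom_const_real[OF fm Q] by blast
  qed
  from c1 c2 have "AE \<omega> in M. \<omega> \<in> Q \<longrightarrow> f \<omega> = Complex c1 c2"
    by eventually_elim (auto simp: complex_eq_iff)
  then show ?thesis by blast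
qed




definition finitary :: "'a measure \<Rightarrow> 'a set \<Rightarrow> bool" where
  "finitary M Z \<longleftrightarrow> (\<forall>P::nat \<Rightarrow> 'a set. (\<forall>n. P n \<in> sets M \<and> P n \<subseteq> Z \<and> emeasure M (P n) \<noteq> 0) \<longrightarrow> \<not> disjoint_family P)"

lemma disj_from_chain:
  fixes D :: "nat \<Rightarrow> 'a set" and U :: "nat \<Rightarrow> 'a set"
  assumes "\<And>n. D n \<subseteq> U (Suc n)" "\<And>m n. m \<le> n \<Longrightarrow> U m \<subseteq> U n" "\<And>n. D n \<inter> U n = {}"
  shows "disjoint_family D"
  unfolding disjoint_family_on_def
proof (intro ballI impI)
  fix m n :: nat assume "m \<noteq> n"
  then consider "m < n" | "n < m" by linarith
  then show "D m \<inter> D n = {}"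
  proof cases
    case 1
    then have "D m \<subseteq> U n" using assms(1)[of m] assms(2)[of "Suc m" n] by auto
    then show ?thesis using assms(3)[of n] by blast
  next
    case 2
    then have "D n \<subseteq> U m" using assms(1)[of n] assms(2)[of "Suc n" m] by auto
    then show ?thesis using assms(3)[of m] by blast
  qed
qed

lemma has_atom:
  assumes fin: "finitary M Z" and P: "P \<in> sets M" "P \<subseteq> Z" "emeasure M P \<noteq> 0"
  shows "\<exists>Q. atom M Q \<and> Q \<subseteq> P"
proof (rule ccontr)
  assume na: "\<not> ?thesis"
  define good where "good R \<longleftrightarrow> R \<in> sets M \<and> R \<subseteq> P \<and> emeasure M R \<noteq> 0" for R
  have split: "\<exists>S. S \<in> sets M \<and> S \<subseteq> R \<and> emeasure M S \<noteq> 0 \<and> emeasure M (R - S) \<noteq> 0" if "good R" for R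
  proof -
    have "\<not> atom M R" using na that good_def by blast
    then show ?thesis using that unfolding atom_def good_def by blast
  qed
  define spl where "spl R = (SOME S. S \<in> sets M \<and> S \<subseteq> R \<and> emeasure M S \<noteq> 0 \<and> emeasure M (R - S) \<noteq> 0)" for R
  have spl: "spl R \<in> sets M \<and> spl R \<subseteq> R \<and> emeasure M (spl R) \<noteq> 0 \<and> emeasure M (R - spl R) \<noteq> 0"
    if "good R" for R
    unfolding spl_def by (rule someI_ex[OF split[OF that]])
  define Rs where "Rs = rec_nat P (\<lambda>_ R. spl R)"
  have Rs0: "Rs 0 = P" and RsS: "\<And>n. Rs (Suc n) = spl (Rs n)" unfolding Rs_def by simp_all
  have g: "good (Rs n)" for n
  proof (induction n)
    case 0 then show ?case using P unfolding good_def Rs0 by simp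
  next
    case (Suc n)
    then show ?case using spl[OF Suc] unfolding good_def RsS by blast
  qed
  define D where "D n = Rs n - Rs (Suc n)" for n
  have Dsub: "Rs (Suc n) \<subseteq> Rs n" for n using spl[OF g[of n]] RsS by simp
  have mono: "m \<le> n \<Longrightarrow> Rs n \<subseteq> Rs m" for m n
    by (induction n rule: dec_induct) (use Dsub in auto)
  have "disjoint_family D"
  proof (rule disj_from_chain[where U="\<lambda>n. - Rs n"])
    show "D n \<subseteq> - Rs (Suc n)" for n unfolding D_def by auto
    show "m \<le> n \<Longrightarrow> - Rs m \<subseteq> - Rs n" for m n using mono by auto
    show "D n \<inter> - Rs n = {}" for n unfolding D_def by auto
  qed
  moreover have "\<forall>n. D n \<in> sets M \<and> D n \<subseteq> Z \<and> emeasure M (D n) \<noteq> 0"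
  proof
    fix n
    have gn: "Rs n \<in> sets M" "Rs n \<subseteq> P" using g[of n] unfolding good_def by auto
    have sp: "spl (Rs n) \<in> sets M" "emeasure M (Rs n - spl (Rs n)) \<noteq> 0" using spl[OF g[of n]] by auto
    have Dn: "D n = Rs n - spl (Rs n)" unfolding D_def RsS ..
    show "D n \<in> sets M \<and> D n \<subseteq> Z \<and> emeasure M (D n) \<noteq> 0"
      unfolding Dn using gn sp P(2) by blast
  qed
  ultimately show False using fin unfolding finitary_def by (meson spec)
qed

lemma cover:
  assumes fin: "finitary M Z" and Zs: "Z \<in> sets M"
  shows "\<exists>(n0::nat) As. (\<forall>m<n0. atom M (As m) \<and> As m \<subseteq> Z) \<and> (\<forall>m<n0. \<forall>m'<n0. m \<noteq> m' \<longrightarrow> As m \<inter> As m' = {})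
     \<and> emeasure M (Z - (\<Union>m<n0. As m)) = 0"
proof -
  define f where "f S = (SOME Q. atom M Q \<and> Q \<subseteq> Z - S)" for S
  have fS: "atom M (f S) \<and> f S \<subseteq> Z - S" if "S \<in> sets M" "emeasure M (Z - S) \<noteq> 0" for S
  proof -
    have "\<exists>Q. atom M Q \<and> Q \<subseteq> Z - S" using has_atom[OF fin _ _ that(2)] Zs that(1) by blast
    then show ?thesis unfolding f_def by (rule someI_ex)
  qed
  define U where "U = rec_nat {} (\<lambda>_ S. S \<union> f S)"
  have U0: "U 0 = {}" and US: "\<And>n. U (Suc n) = U n \<union> f (U n)" unfolding U_def by simp_all
  have Uun: "U n = (\<Union>m<n. f (U m))" for n
    by (induction n) (auto simp: U0 US lessThan_Suc)
  have Umono: "m \<le> n \<Longrightarrow> U m \<subseteq> U n" for m n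
    by (induction n rule: dec_induct) (auto simp: US)
  show ?thesis
  proof (cases "\<forall>n. emeasure M (Z - U n) \<noteq> 0")
    case True
    have Us: "U n \<in> sets M \<and> U n \<subseteq> Z" for n
    proof (induction n)
      case 0 then show ?case by (simp add: U0)
    next
      case (Suc n)
      have "atom M (f (U n)) \<and> f (U n) \<subseteq> Z - U n" using fS Suc True by blast
      then show ?case using Suc unfolding US atom_def by auto
    qed
    have fa: "atom M (f (U n)) \<and> f (U n) \<subseteq> Z - U n" for n using fS Us True by blast
    have "disjoint_family (\<lambda>n. f (U n))"
    proof (rule disj_from_chain[where U=U])
      show "f (U n) \<subseteq> U (Suc n)" for n unfolding US by blast
      show "m \<le> n \<Longrightarrow> U m \<subseteq> U n" for m n by (rule Umono)
      show "f (U n) \<inter> U n = {}" for n using fa[of n] by blast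
    qed
    moreover have "\<forall>n. f (U n) \<in> sets M \<and> f (U n) \<subseteq> Z \<and> emeasure M (f (U n)) \<noteq> 0"
      using fa unfolding atom_def by blast
    ultimately have False using fin unfolding finitary_def by (meson spec)
    then show ?thesis ..
  next
    case False
    then have ex: "\<exists>n. emeasure M (Z - U n) = 0" by blast
    define n0 where "n0 = (LEAST n. emeasure M (Z - U n) = 0)"
    have n0: "emeasure M (Z - U n0) = 0" unfolding n0_def by (rule LeastI_ex[OF ex])
    have lt: "m < n0 \<Longrightarrow> emeasure M (Z - U m) \<noteq> 0" for m unfolding n0_def using not_less_Least by blast
    have Us: "m \<le> n0 \<Longrightarrow> U m \<in> sets M \<and> U m \<subseteq> Z" for m
    proof (induction m)
      case 0 then show ?case by (simp add: U0)
    next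
      case (Suc m)
      then have "atom M (f (U m)) \<and> f (U m) \<subseteq> Z - U m" using fS lt by simp
      then show ?case using Suc unfolding US atom_def by auto
    qed
    have fa: "m < n0 \<Longrightarrow> atom M (f (U m)) \<and> f (U m) \<subseteq> Z - U m" for m using fS Us lt by simp
    show ?thesis
    proof -
      have a1: "\<forall>m<n0. atom M (f (U m)) \<and> f (U m) \<subseteq> Z" using fa by blast
      have a2: "f (U m) \<inter> f (U m') = {}" if "m < n0" "m' < n0" "m \<noteq> m'" for m m'
      proof -
        have "m < m' \<or> m' < m" using that by linarith
        then show ?thesis
        proof
          assume "m < m'"
          then have "f (U m) \<subseteq> U m'" using Umono[of "Suc m" m'] US[of m] by auto
          then show ?thesis using fa[OF that(2)] by blast
        next
          assume "m' < m"
          then have "f (U m') \<subseteq> U m" using Umono[of "Suc m'" m] US[of m'] by auto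
          then show ?thesis using fa[OF that(1)] by blast
        qed
      qed
      have a3: "emeasure M (Z - (\<Union>m<n0. f (U m))) = 0" using n0 Uun[of n0] by simp
      show ?thesis
        by (rule exI[where x=n0], rule exI[where x="\<lambda>m. f (U m)"]) (use a1 a2 a3 in blast)
    qed
  qed
qed




lemma findim:
  fixes As :: "nat \<Rightarrow> 'a set"
  assumes fm: "finite_measure M" and Zs: "Z \<in> sets M"
    and at: "\<forall>m<n0. atom M (As m) \<and> As m \<subseteq> Z"
    and dj: "\<forall>m<n0. \<forall>m'<n0. m \<noteq> m' \<longrightarrow> As m \<inter> As m' = {}"
    and nul: "emeasure M (Z - (\<Union>m<n0. As m)) = 0"
  shows "fin_dim_corner M Z"
  unfolding fin_dim_corner_def
proof -
  define ind where "ind m = (indicator (As m) :: 'a \<Rightarrow> complex)" for m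
  define G where "G = ind ` {..<n0}"
  have Ass: "m < n0 \<Longrightarrow> As m \<in> sets M" for m using at unfolding atom_def by blast
  have Ane: "m < n0 \<Longrightarrow> As m \<noteq> {}" for m using at unfolding atom_def by auto
  have inj: "inj_on ind {..<n0}"
  proof (rule inj_onI)
    fix m m' assume m: "m \<in> {..<n0}" and m': "m' \<in> {..<n0}" and e: "ind m = ind m'"
    show "m = m'"
    proof (rule ccontr)
      assume ne: "m \<noteq> m'"
      obtain \<omega> where \<omega>: "\<omega> \<in> As m" using Ane m by blast
      then have "\<omega> \<notin> As m'" using dj m m' ne by blast
      then have "ind m \<omega> \<noteq> ind m' \<omega>" using \<omega> by (simp add: ind_def)
      with e show False by simp
    qed
  qed
  have GL: "G \<subseteq> Linf M"
  proof
    fix g assume "g \<in> G"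
    then obtain m where m: "m < n0" and g: "g = ind m" unfolding G_def by blast
    have "(indicator (As m) :: 'a \<Rightarrow> complex) \<in> borel_measurable M" using Ass[OF m] by measurable
    moreover have "AE \<omega> in M. cmod (indicator (As m) \<omega> :: complex) \<le> 1"
      by (rule AE_I2) (simp add: indicator_def)
    ultimately show "g \<in> Linf M" unfolding Linf_def g ind_def by blast
  qed
  show "\<exists>G. finite G \<and> G \<subseteq> Linf M \<and> (\<forall>f\<in>Linf M. \<exists>c. AE \<omega> in M. indicator Z \<omega> * f \<omega> = (\<Sum>g\<in>G. c g * g \<omega>))"
  proof (intro exI[of _ G] conjI ballI)
    show "finite G" unfolding G_def by simp
    show "G \<subseteq> Linf M" by (rule GL)
    fix f assume f: "f \<in> Linf M"
    have "\<forall>m\<in>{..<n0}. \<exists>c. AE \<omega> in M. \<omega> \<in> As m \<longrightarrow> f \<omega> = c"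
    proof
      fix m assume "m \<in> {..<n0}"
      then have "atom M (As m)" using at by simp
      then show "\<exists>c. AE \<omega> in M. \<omega> \<in> As m \<longrightarrow> f \<omega> = c" by (rule atom_const[OF fm _ f])
    qed
    from bchoice[OF this] obtain cc where cc: "\<forall>m\<in>{..<n0}. AE \<omega> in M. \<omega> \<in> As m \<longrightarrow> f \<omega> = cc m"
      by blast
    define c where "c g = cc (the_inv_into {..<n0} ind g)" for g
    have sumeq: "(\<Sum>g\<in>G. c g * g \<omega>) = (\<Sum>m<n0. cc m * ind m \<omega>)" for \<omega>
      unfolding G_def by (subst sum.reindex[OF inj]) (simp add: c_def the_inv_into_f_f[OF inj])
    have cc': "AE \<omega> in M. \<forall>m\<in>{..<n0}. \<omega> \<in> As m \<longrightarrow> f \<omega> = cc m"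
      by (rule AE_finite_allI) (use cc in auto)
    have Rs: "Z - (\<Union>m<n0. As m) \<in> sets M" using Zs Ass by auto
    have "Z - (\<Union>m<n0. As m) \<in> null_sets M" using Rs nul by auto
    from AE_not_in[OF this] cc'
    have "AE \<omega> in M. indicator Z \<omega> * f \<omega> = (\<Sum>m<n0. cc m * ind m \<omega>)"
    proof eventually_elim
      case (elim \<omega>)
      show ?case
      proof (cases "\<exists>j<n0. \<omega> \<in> As j")
        case True
        then obtain j where j: "j < n0" "\<omega> \<in> As j" by blast
        have "\<forall>m\<in>{..<n0}. cc m * ind m \<omega> = (if m = j then cc j else 0)"
        proof
          fix m assume m: "m \<in> {..<n0}"
          show "cc m * ind m \<omega> = (if m = j then cc j else 0)"
          proof (cases "m = j")
            case False
            then have "\<omega> \<notin> As m" using dj j m by blast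
            then show ?thesis using False by (simp add: ind_def)
          qed (use j in \<open>simp add: ind_def\<close>)
        qed
        then have "(\<Sum>m<n0. cc m * ind m \<omega>) = (\<Sum>m<n0. (if m = j then cc j else 0))"
          by (intro sum.cong refl) blast
        also have "\<dots> = cc j" using j by simp
        moreover have "\<omega> \<in> Z" using j at by blast
        moreover have "f \<omega> = cc j" using j elim by blast
        ultimately show ?thesis by simp
      next
        case False
        then have "(\<Sum>m<n0. cc m * ind m \<omega>) = 0" by (simp add: ind_def)
        moreover have "\<omega> \<notin> Z" using False elim by auto
        ultimately show ?thesis by simp
      qed
    qed
    then show "\<exists>c. AE \<omega> in M. indicator Z \<omega> * f \<omega> = (\<Sum>g\<in>G. c g * g \<omega>)"
      using sumeq by (intro exI[of _ c]) simp
  qed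
qed


theorem lemma3p3:
  fixes \<mu> :: "'a measure" and \<Lambda> :: "(real \<Rightarrow> real) set"
    and \<delta> :: "('a \<Rightarrow> complex) \<Rightarrow> ('a \<Rightarrow> complex)"
  assumes "finite_measure \<mu>"
    and "\<Lambda> \<noteq> {}"
    and "quadratic_family \<Lambda>"
    and "additive_derivation \<mu> (orlicz_inter \<mu> \<Lambda>) \<delta>"
  shows "\<exists>Z. support_proj \<mu> (orlicz_inter \<mu> \<Lambda>) \<delta> Z \<and> fin_dim_corner \<mu> Z"
proof -
  interpret Dv \<mu> \<Lambda> \<delta> by (rule Dv.intro) (rule assms)+
  obtain Z where Zf: "fx Z" and Zmin: "\<forall>W. fx W \<longrightarrow> (AE \<omega> in \<mu>. \<omega> \<in> Z \<longrightarrow> \<omega> \<in> W)"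
    using support_exists by blast
  have Zs: "Z \<in> sets \<mu>" using Zf fix_sets by blast
  have sp: "support_proj \<mu> (orlicz_inter \<mu> \<Lambda>) \<delta> Z"
    unfolding support_proj_def
  proof (intro conjI allI impI)
    show "Z \<in> sets \<mu>" by (rule Zs)
    show "AE \<omega> in \<mu>. \<omega> \<in> Z \<longrightarrow> \<omega> \<in> W" if "fx W" for W using Zmin that by blast
    show "AE \<omega> in \<mu>. \<omega> \<in> Z' \<longrightarrow> \<omega> \<in> Z"
      if "Z' \<in> sets \<mu> \<and> (\<forall>W. fx W \<longrightarrow> (AE \<omega> in \<mu>. \<omega> \<in> Z' \<longrightarrow> \<omega> \<in> W))" for Z'
      using that Zf by blast
  qed
  have fin: "finitary \<mu> Z"
    unfolding finitary_def
  proof (intro allI impI notI)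
    fix P :: "nat \<Rightarrow> 'a set"
    assume P: "\<forall>n. P n \<in> sets \<mu> \<and> P n \<subseteq> Z \<and> emeasure \<mu> (P n) \<noteq> 0" and dj: "disjoint_family P"
    show False
      by (rule finitary[OF Zf _ _ _ _ dj]) (use Zmin P in blast)+
  qed
  obtain n0 :: nat and As where at: "\<forall>m<n0. atom \<mu> (As m) \<and> As m \<subseteq> Z"
    and dj: "\<forall>m<n0. \<forall>m'<n0. m \<noteq> m' \<longrightarrow> As m \<inter> As m' = {}"
    and nul: "emeasure \<mu> (Z - (\<Union>m<n0. As m)) = 0"
    using cover[OF fin Zs] by blast
  have "fin_dim_corner \<mu> Z" by (rule findim[OF assms(1) Zs at dj nul])
  with sp show ?thesis by blast
qed

end
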